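(* Let $\mathbf w\in\mathbb R^m$ and let $X,Y$ be distinct candidates. The following are equivalent: (i) for all profiles $\mathbf p,\mathbf q\in P$ with $\mathbf p\sim_{X,Y}\mathbf q$, $\mathbf p\cdot\mathbf v_{X>Y}>0$ implies $\mathbf q\cdot\mathbf v_{X>Y}>0$; (ii) every $T\in SO(P)$ with $T(\mathbf r_{X>Y})=\mathbf r_{X>Y}$ satisfies $T\big((\mathbf v_{X>Y})_+\big)\subseteq(\mathbf v_{X>Y})_+$.
   Context: Fix an integer $n\ge 2$ and a set $\mathbf C$ of $n$ candidates. Fix a composition $\lambda=(\lambda_1,\dots,\lambda_m)$ of $n$ (positive integers with $\sum_i\lambda_i=n$), write $|\lambda|=m$ and $[m]=\{1,\dots,m\}$. A ballot is a function $b:\mathbf C\to[m]$ with $|b^{-1}(i)|=\lambda_i$ for every $i$; $\mathbf C_\lambda$ denotes the set of ballots. The profile space is $P=\mathbb R^{\mathbf C_\lambda}$ with basis $\{\delta_b\}$ (indicator functions) and inner product $\mathbf p\cdot\mathbf q=\sum_b\mathbf p(b)\mathbf q(b)$; $\mathbf 1=\sum_b\delta_b$. For candidates $X,Y$: $\mathbf a_{X>Y}=\sum_{b:\,b(X)<b(Y)}\delta_b$, $\mathbf r_{X>Y}=\mathbf a_{X>Y}-\mathbf a_{Y>X}$. For $\mathbf w\in\mathbb R^m$ (a function $[m]\to\mathbb R$), $\mathbf v_X\in P$ is $\mathbf v_X(b)=\mathbf w(b(X))$ and $\mathbf v_{X>Y}=\mathbf v_X-\mathbf v_Y$. For $\mathbf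 v\in P$, $(\mathbf v)_+=\{\mathbf u\in P:\mathbf u\cdot\mathbf v>0\}$. Two profiles are $X,Y$-equivalent, $\mathbf p\sim_{X,Y}\mathbf q$, if $(\mathbf p-\mathbf q)\cdot\mathbf a_{X>Y}=0$ and $(\mathbf p-\mathbf q)\cdot\mathbf a_{Y>X}=0$. $SO(P)$ denotes the group of linear isometries of $P$ of determinant $1$. *)

theory Defs
  imports "HOL-Analysis.Analysis"
begin

text \<open>A composition lambda of n is a
list of positive naturals with sum n; m = length lambda and [m] = {1..m}.
A ballot is a function b :: 'c => nat with b x in {1..m} for x in C, b x = 0 outside C
(extensional convention) and |b^-1(i)| = lambda_i.\<close>

definition is_composition :: "nat list \<Rightarrow> nat \<Rightarrow> bool" where
  "is_composition lam n \<longleftrightarrow> (\<forall>i\<in>set lam. 0 < i) \<and> sum_list lam = n"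

definition ballots :: "'c set \<Rightarrow> nat list \<Rightarrow> ('c \<Rightarrow> nat) set" where
  "ballots C lam = {b. (\<forall>x\<in>C. b x \<in> {1..length lam}) \<and> (\<forall>x. x \<notin> C \<longrightarrow> b x = 0)
      \<and> (\<forall>i\<in>{1..length lam}. card {x\<in>C. b x = i} = lam ! (i - 1))}"

text \<open>Profile space P = R^{C_lambda}: real functions on ballots, zero outside the ballot set.\<close>

type_synonym 'c profile = "('c \<Rightarrow> nat) \<Rightarrow> real"

definition profiles :: "'c set \<Rightarrow> nat list \<Rightarrow> 'c profile set" where
  "profiles C lam = {p. \<forall>b. b \<notin> ballots C lam \<longrightarrow> p b = 0}"

definition pinner :: "'c set \<Rightarrow> nat list \<Rightarrow> 'c profile \<Rightarrow> 'c profile \<Rightarrow> real" where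
  "pinner C lam p q = (\<Sum>b\<in>ballots C lam. p b * q b)"

definition delta :: "'c set \<Rightarrow> nat list \<Rightarrow> ('c \<Rightarrow> nat) \<Rightarrow> 'c profile" where
  "delta C lam b = (\<lambda>b'. if b' = b \<and> b \<in> ballots C lam then 1 else 0)"

definition avec :: "'c set \<Rightarrow> nat list \<Rightarrow> 'c \<Rightarrow> 'c \<Rightarrow> 'c profile" where
  "avec C lam X Y = (\<lambda>b. if b \<in> ballots C lam \<and> b X < b Y then 1 else 0)"

definition rvec :: "'c set \<Rightarrow> nat list \<Rightarrow> 'c \<Rightarrow> 'c \<Rightarrow> 'c profile" where
  "rvec C lam X Y = (\<lambda>b. avec C lam X Y b - avec C lam Y X b)"

text \<open>w : [m] -> R is represented as a function nat => real; only its values on {1..m} matter.\<close>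

definition vcand :: "'c set \<Rightarrow> nat list \<Rightarrow> (nat \<Rightarrow> real) \<Rightarrow> 'c \<Rightarrow> 'c profile" where
  "vcand C lam w X = (\<lambda>b. if b \<in> ballots C lam then w (b X) else 0)"

definition vpair :: "'c set \<Rightarrow> nat list \<Rightarrow> (nat \<Rightarrow> real) \<Rightarrow> 'c \<Rightarrow> 'c \<Rightarrow> 'c profile" where
  "vpair C lam w X Y = (\<lambda>b. vcand C lam w X b - vcand C lam w Y b)"

definition posHalf :: "'c set \<Rightarrow> nat list \<Rightarrow> 'c profile \<Rightarrow> 'c profile set" where
  "posHalf C lam v = {u \<in> profiles C lam. pinner C lam u v > 0}"

definition equivXY :: "'c set \<Rightarrow> nat list \<Rightarrow> 'c \<Rightarrow> 'c \<Rightarrow> 'c profile \<Rightarrow> 'c profile \<Rightarrow> bool" where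
  "equivXY C lam X Y p q \<longleftrightarrow>
     pinner C lam (\<lambda>b. p b - q b) (avec C lam X Y) = 0 \<and>
     pinner C lam (\<lambda>b. p b - q b) (avec C lam Y X) = 0"

definition plinear :: "'c set \<Rightarrow> nat list \<Rightarrow> ('c profile \<Rightarrow> 'c profile) \<Rightarrow> bool" where
  "plinear C lam T \<longleftrightarrow> (\<forall>p\<in>profiles C lam. T p \<in> profiles C lam) \<and>
     (\<forall>p\<in>profiles C lam. \<forall>q\<in>profiles C lam. \<forall>c::real.
        T (\<lambda>b. c * p b + q b) = (\<lambda>b. c * T p b + T q b))"

definition pdet :: "'c set \<Rightarrow> nat list \<Rightarrow> ('c profile \<Rightarrow> 'c profile) \<Rightarrow> real" where
  "pdet C lam T = (\<Sum>\<sigma> | \<sigma> permutes ballots C lam.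
      of_int (sign \<sigma>) * (\<Prod>b\<in>ballots C lam. T (delta C lam (\<sigma> b)) b))"

definition SO_P :: "'c set \<Rightarrow> nat list \<Rightarrow> ('c profile \<Rightarrow> 'c profile) set" where
  "SO_P C lam = {T. plinear C lam T \<and>
      (\<forall>p\<in>profiles C lam. \<forall>q\<in>profiles C lam.
         pinner C lam (\<lambda>b. T p b - T q b) (\<lambda>b. T p b - T q b)
           = pinner C lam (\<lambda>b. p b - q b) (\<lambda>b. p b - q b)) \<and>
      pdet C lam T = 1}"

end

theory Submission
  imports Defs
begin

abbreviation tr :: "'a \<Rightarrow> 'a \<Rightarrow> 'a \<Rightarrow> 'a" where "tr \<equiv> Transposition.transpose"

lemma fin_ballots: "finite C \<Longrightarrow> finite (ballots C lam)"
proof -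
  assume "finite C"
  have "ballots C lam \<subseteq> {f. \<forall>x. (x \<in> C \<longrightarrow> f x \<in> {1..length lam}) \<and> (x \<notin> C \<longrightarrow> f x = 0)}"
    unfolding ballots_def by auto
  thus ?thesis using finite_set_of_finite_funs[OF \<open>finite C\<close>, of "{1..length lam}" 0]
    by (meson finite_atLeastAtMost finite_subset)
qed

lemma sig_ballot:
  assumes "X \<in> C" "Y \<in> C" "b \<in> ballots C lam"
  shows "b \<circ> tr X Y \<in> ballots C lam"
proof -
  have trC: "\<And>x. x \<in> C \<Longrightarrow> tr X Y x \<in> C" using assms by (auto simp: Transposition.transpose_def)
  have trnC: "\<And>x. x \<notin> C \<Longrightarrow> tr X Y x = x" using assms by (auto simp: Transposition.transpose_def)
  have eq: "{x\<in>C. (b \<circ> tr X Y) x = i} = tr X Y ` {x\<in>C. b x = i}" for i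
  proof
    show "{x\<in>C. (b \<circ> tr X Y) x = i} \<subseteq> tr X Y ` {x\<in>C. b x = i}"
    proof
      fix x assume "x \<in> {x\<in>C. (b \<circ> tr X Y) x = i}"
      then have "tr X Y x \<in> {x\<in>C. b x = i}" using trC by auto
      then show "x \<in> tr X Y ` {x\<in>C. b x = i}"
        by (metis image_eqI transpose_involutory)
    qed
    show "tr X Y ` {x\<in>C. b x = i} \<subseteq> {x\<in>C. (b \<circ> tr X Y) x = i}"
      using trC by auto
  qed
  have "card {x\<in>C. (b \<circ> tr X Y) x = i} = card {x\<in>C. b x = i}" for i
    unfolding eq by (rule card_image) (meson inj_on_inverseI transpose_involutory)
  then show ?thesis using assms(3) trC trnC unfolding ballots_def by auto
qed

lemma sum_two:
  fixes x y :: real and g :: "'b \<Rightarrow> real"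
  assumes "finite B" "b1 \<in> B" "b2 \<in> B" "b1 \<noteq> b2"
  shows "(\<Sum>b\<in>B. (if b = b1 then x else if b = b2 then y else 0) * g b) = x * g b1 + y * g b2"
proof -
  have "(\<Sum>b\<in>B. (if b = b1 then x else if b = b2 then y else 0) * g b)
      = (\<Sum>b\<in>B. (if b = b1 then x * g b1 else 0) + (if b = b2 then y * g b2 else 0))"
    by (rule sum.cong) (use assms in auto)
  also have "\<dots> = x * g b1 + y * g b2"
    using assms by (simp add: sum.distrib)
  finally show ?thesis .
qed

lemma pinner_sym: "pinner C lam p q = pinner C lam q p"
  unfolding pinner_def by (simp add: mult.commute)

lemma pinner_expand:
  "pinner C lam (\<lambda>b. f b - g b) (\<lambda>b. f b - g b) = pinner C lam f f - 2 * pinner C lam f g + pinner C lam g g"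
  unfolding pinner_def
  by (simp add: algebra_simps sum.distrib sum_subtractf sum_distrib_left)

lemma so_inner:
  assumes T: "T \<in> SO_P C lam" and p: "p \<in> profiles C lam" and q: "q \<in> profiles C lam"
  shows "pinner C lam (T p) (T q) = pinner C lam p q"
proof -
  define Z where "Z = (\<lambda>b::'a \<Rightarrow> nat. 0::real)"
  have Zp: "Z \<in> profiles C lam" unfolding Z_def profiles_def by auto
  have lin: "plinear C lam T" and iso: "\<And>p q. p \<in> profiles C lam \<Longrightarrow> q \<in> profiles C lam \<Longrightarrow>
      pinner C lam (\<lambda>b. T p b - T q b) (\<lambda>b. T p b - T q b) = pinner C lam (\<lambda>b. p b - q b) (\<lambda>b. p b - q b)"
    using T unfolding SO_P_def by auto
  have "T (\<lambda>b. (-1) * Z b + Z b) = (\<lambda>b. (-1) * T Z b + T Z b)"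
    using lin Zp unfolding plinear_def by blast
  then have TZ: "T Z = Z" unfolding Z_def by simp
  have nrm: "pinner C lam (T x) (T x) = pinner C lam x x" if "x \<in> profiles C lam" for x
    using iso[OF that Zp] unfolding TZ by (simp add: Z_def)
  have "pinner C lam (\<lambda>b. T p b - T q b) (\<lambda>b. T p b - T q b) = pinner C lam (\<lambda>b. p b - q b) (\<lambda>b. p b - q b)"
    using iso p q by blast
  then show ?thesis unfolding pinner_expand using nrm[OF p] nrm[OF q] by simp
qed

lemma perm_SO:
  assumes fin: "finite (ballots C lam)" and pi: "\<pi> permutes ballots C lam" and sg: "sign \<pi> = 1"
  shows "(\<lambda>p b. p (\<pi> b)) \<in> SO_P C lam"
proof -
  let ?B = "ballots C lam"
  let ?T = "(\<lambda>p b. p (\<pi> b)) :: (('a \<Rightarrow> nat) \<Rightarrow> real) \<Rightarrow> ('a \<Rightarrow> nat) \<Rightarrow> real"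
  have lin: "plinear C lam ?T"
    unfolding plinear_def profiles_def using permutes_not_in[OF pi] by auto
  have iso: "pinner C lam (\<lambda>b. ?T p b - ?T q b) (\<lambda>b. ?T p b - ?T q b) = pinner C lam (\<lambda>b. p b - q b) (\<lambda>b. p b - q b)"
    for p q
    unfolding pinner_def using sum.permute[OF pi, of "\<lambda>b. (p b - q b) * (p b - q b)"]
    by (simp add: o_def)
  have prod: "(\<Prod>b\<in>?B. ?T (delta C lam (\<tau> b)) b) = (if \<tau> = \<pi> then 1 else 0)"
    if tau: "\<tau> permutes ?B" for \<tau>
  proof (cases "\<tau> = \<pi>")
    case True
    then show ?thesis using permutes_in_image[OF pi] by (simp add: delta_def)
  next
    case False
    then obtain x where "\<tau> x \<noteq> \<pi> x" by auto
    then have "x \<in> ?B" using permutes_not_in[OF pi] permutes_not_in[OF tau] by metis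
    then have "\<exists>x\<in>?B. ?T (delta C lam (\<tau> x)) x = 0"
      using \<open>\<tau> x \<noteq> \<pi> x\<close> by (auto simp: delta_def)
    then show ?thesis using False fin by (simp add: prod_zero)
  qed
  have "pdet C lam ?T = (\<Sum>\<tau> | \<tau> permutes ?B. (if \<tau> = \<pi> then of_int (sign \<tau>) else 0))"
    unfolding pdet_def by (rule sum.cong) (auto simp: prod)
  also have "\<dots> = of_int (sign \<pi>)"
    using pi by (simp add: sum.delta' finite_permutations fin)
  finally have "pdet C lam ?T = 1" using sg by simp
  then show ?thesis unfolding SO_P_def using lin iso by blast
qed

lemma dpos: "(d::real) = a - b \<Longrightarrow> d \<noteq> 0 \<Longrightarrow> d * a - d * b > 0"
proof -
  assume "d = a - b" "d \<noteq> 0"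
  then have "d * a - d * b = d * d" by (simp add: right_diff_distrib)
  then show ?thesis using \<open>d \<noteq> 0\<close> by (auto simp add: zero_less_mult_iff)
qed

lemma dneg: "(d::real) = a - b \<Longrightarrow> d \<noteq> 0 \<Longrightarrow> d * b - d * a < 0"
  using dpos[of d a b] by simp

theorem mainTheorem7:
  fixes C :: "'c set" and n :: nat and lam :: "nat list" and w :: "nat \<Rightarrow> real"
    and X Y :: 'c
  assumes "finite C" and "card C = n" and "n \<ge> 2"
    and "is_composition lam n"
    and "X \<in> C" and "Y \<in> C" and "X \<noteq> Y"
  shows "(\<forall>p\<in>profiles C lam. \<forall>q\<in>profiles C lam.
            equivXY C lam X Y p q \<longrightarrow>
            pinner C lam p (vpair C lam w X Y) > 0 \<longrightarrow>
            pinner C lam q (vpair C lam w X Y) > 0)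
     \<longleftrightarrow>
         (\<forall>T\<in>SO_P C lam. T (rvec C lam X Y) = rvec C lam X Y \<longrightarrow>
            T ` posHalf C lam (vpair C lam w X Y) \<subseteq> posHalf C lam (vpair C lam w X Y))"
proof -
  let ?B = "ballots C lam"
  let ?v = "vpair C lam w X Y"
  let ?r = "rvec C lam X Y"
  let ?a1 = "avec C lam X Y"
  let ?a2 = "avec C lam Y X"
  define sg where "sg = (\<lambda>b::'c \<Rightarrow> nat. b \<circ> tr X Y)"
  have fin: "finite ?B" using fin_ballots assms(1) by blast
  have sgB: "b \<in> ?B \<Longrightarrow> sg b \<in> ?B" for b unfolding sg_def by (rule sig_ballot[OF assms(5,6)])
  have sgX: "sg b X = b Y" "sg b Y = b X" for b unfolding sg_def by simp_all
  have sgsg: "sg (sg b) = b" for b unfolding sg_def by (simp add: comp_assoc)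
  have vB: "b \<in> ?B \<Longrightarrow> ?v b = w (b X) - w (b Y)" for b by (simp add: vpair_def vcand_def)
  have rB: "b \<in> ?B \<Longrightarrow> ?r b = (if b X < b Y then 1 else if b Y < b X then -1 else 0)" for b
    by (simp add: rvec_def avec_def)
  have rout: "b \<notin> ?B \<Longrightarrow> ?r b = 0" for b by (simp add: rvec_def avec_def)
  have rprof: "?r \<in> profiles C lam" using rout by (simp add: profiles_def)
  define NC where "NC \<longleftrightarrow> (\<exists>b1\<in>?B. \<exists>b2\<in>?B. b1 X < b1 Y \<and> b2 X < b2 Y \<and> ?v b1 \<noteq> ?v b2)"
  have K: "\<exists>c. \<forall>b\<in>?B. ?v b = c * ?r b" if "\<not> NC"
  proof -
    have NCf: "?v b1 = ?v b2" if "b1 \<in> ?B" "b2 \<in> ?B" "b1 X < b1 Y" "b2 X < b2 Y" for b1 b2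
      using \<open>\<not> NC\<close> that unfolding NC_def by blast
    show ?thesis
    proof (cases "\<exists>b0\<in>?B. b0 X < b0 Y")
      case True
      then obtain b0 where b0: "b0 \<in> ?B" "b0 X < b0 Y" by blast
      have "?v b = ?v b0 * ?r b" if b: "b \<in> ?B" for b
      proof -
        consider "b X < b Y" | "b Y < b X" | "b X = b Y" by linarith
        then show ?thesis
        proof cases
          case 1
          have "?v b = ?v b0" using NCf[OF b b0(1) 1 b0(2)] .
          moreover have "?r b = 1" using rB[OF b] 1 by simp
          ultimately show ?thesis by simp
        next
          case 2
          have s: "sg b X < sg b Y" using 2 sgX by simp
          have "?v (sg b) = ?v b0" using NCf[OF sgB[OF b] b0(1) s b0(2)] .
          moreover have "?v (sg b) = - ?v b" using vB[OF b] vB[OF sgB[OF b]] sgX by simp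
          moreover have "?r b = -1" using rB[OF b] 2 by simp
          ultimately show ?thesis by simp
        next
          case 3 then show ?thesis using rB[OF b] vB[OF b] by simp
        qed
      qed
      then show ?thesis by blast
    next
      case False
      have "?v b = 0 * ?r b" if b: "b \<in> ?B" for b
      proof -
        have "\<not> b X < b Y" using False b by blast
        moreover have "\<not> b Y < b X" using False sgB[OF b] sgX by metis
        ultimately have "b X = b Y" by simp
        then show ?thesis using vB[OF b] by simp
      qed
      then show ?thesis by blast
    qed
  qed
  have NCdata: "\<exists>b1 b2 d. b1 \<in> ?B \<and> b2 \<in> ?B \<and> b1 X < b1 Y \<and> b2 X < b2 Y \<and> b1 \<noteq> b2 \<and> d = ?v b1 - ?v b2 \<and> d \<noteq> 0"
    if NC using that unfolding NC_def by force
  define u where "u = (\<lambda>b1 b2 d (b::'c\<Rightarrow>nat). if b = b1 then d else if b = b2 then - d else (0::real))"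
  have uprof: "b1 \<in> ?B \<Longrightarrow> b2 \<in> ?B \<Longrightarrow> u b1 b2 d \<in> profiles C lam" for b1 b2 d
    unfolding u_def profiles_def by auto
  have upin: "pinner C lam (u b1 b2 d) g = d * g b1 - d * g b2"
    if "b1 \<in> ?B" "b2 \<in> ?B" "b1 \<noteq> b2" for b1 b2 d g
    unfolding pinner_def u_def using sum_two[OF fin that, of d "-d" g] by simp
  have I_K: "\<not> NC" if I: "\<forall>p\<in>profiles C lam. \<forall>q\<in>profiles C lam.
            equivXY C lam X Y p q \<longrightarrow> pinner C lam p ?v > 0 \<longrightarrow> pinner C lam q ?v > 0"
  proof
    assume NC
    then obtain b1 b2 d where bb: "b1 \<in> ?B" "b2 \<in> ?B" "b1 X < b1 Y" "b2 X < b2 Y" "b1 \<noteq> b2"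
      and d: "d = ?v b1 - ?v b2" "d \<noteq> 0" using NCdata by blast
    define Z where "Z = (\<lambda>b::'c\<Rightarrow>nat. 0::real)"
    have Zp: "Z \<in> profiles C lam" unfolding Z_def profiles_def by auto
    have e: "(\<lambda>b. u b1 b2 d b - Z b) = u b1 b2 d" unfolding Z_def by simp
    have "equivXY C lam X Y (u b1 b2 d) Z"
      unfolding equivXY_def e upin[OF bb(1,2,5)] using bb by (simp add: avec_def)
    moreover have "pinner C lam (u b1 b2 d) ?v > 0"
      unfolding upin[OF bb(1,2,5)] using dpos[OF d] .
    moreover have "pinner C lam Z ?v = 0" unfolding Z_def pinner_def by simp
    ultimately show False using I uprof[OF bb(1,2)] Zp by force
  qed
  have II_K: "\<not> NC" if II: "\<forall>T\<in>SO_P C lam. T ?r = ?r \<longrightarrow>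
            T ` posHalf C lam ?v \<subseteq> posHalf C lam ?v"
  proof
    assume NC
    then obtain b1 b2 d where bb: "b1 \<in> ?B" "b2 \<in> ?B" "b1 X < b1 Y" "b2 X < b2 Y" "b1 \<noteq> b2"
      and d: "d = ?v b1 - ?v b2" "d \<noteq> 0" using NCdata by blast
    define s1 where "s1 = sg b1"
    define s2 where "s2 = sg b2"
    have ss: "s1 \<in> ?B" "s2 \<in> ?B" "s1 Y < s1 X" "s2 Y < s2 X"
      unfolding s1_def s2_def using sgB bb sgX by auto
    have s12: "s1 \<noteq> s2" unfolding s1_def s2_def using sgsg[of b1] sgsg[of b2] bb(5) by metis
    have dis: "b1 \<noteq> s1" "b1 \<noteq> s2" "b2 \<noteq> s1" "b2 \<noteq> s2"
      using ss(3,4) bb(3,4) by (metis less_asym)+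
    define \<pi> where "\<pi> = tr b1 b2 \<circ> tr s1 s2"
    have pi: "\<pi> permutes ?B" unfolding \<pi>_def
      by (rule permutes_compose[OF permutes_swap_id[OF ss(1,2)] permutes_swap_id[OF bb(1,2)]])
    have sgn: "sign \<pi> = 1" unfolding \<pi>_def
      by (simp add: sign_compose permutation_swap_id sign_swap_id bb(5) s12)
    define T where "T = (\<lambda>(p::('c\<Rightarrow>nat) \<Rightarrow> real) b. p (\<pi> b))"
    have TSO: "T \<in> SO_P C lam" unfolding T_def using perm_SO[OF fin pi sgn] .
    have pib: "\<pi> b = (if b = b1 then b2 else if b = b2 then b1 else if b = s1 then s2 else if b = s2 then s1 else b)" for b
      unfolding \<pi>_def o_def using dis s12 bb(5) by (simp add: Transposition.transpose_def)
    have rpi: "?r (\<pi> b) = ?r b" for b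
    proof -
      have r1: "?r b1 = 1" "?r b2 = 1" using rB bb by simp_all
      have r2: "?r s1 = -1" "?r s2 = -1" using rB ss by simp_all
      show ?thesis
      proof (cases "b = b1 \<or> b = b2 \<or> b = s1 \<or> b = s2")
        case True
        then show ?thesis using r1 r2 pib dis s12 bb(5) by auto
      next
        case False
        then show ?thesis using pib by simp
      qed
    qed
    have "T ?r = ?r"
    proof
      fix b show "T ?r b = ?r b"
        unfolding T_def by (rule rpi)
    qed
    then have sub: "T ` posHalf C lam ?v \<subseteq> posHalf C lam ?v" using II TSO by blast
    have "pinner C lam (u b1 b2 d) ?v > 0"
      unfolding upin[OF bb(1,2,5)] using dpos[OF d] .
    then have "u b1 b2 d \<in> posHalf C lam ?v"
      unfolding posHalf_def using uprof[OF bb(1,2)] by blast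
    then have "T (u b1 b2 d) \<in> posHalf C lam ?v" using sub by blast
    moreover have "T (u b1 b2 d) = u b2 b1 d"
    proof
      fix b show "T (u b1 b2 d) b = u b2 b1 d b"
        unfolding T_def u_def pib using dis s12 bb(5) by simp
    qed
    moreover have "pinner C lam (u b2 b1 d) ?v < 0"
      unfolding upin[OF bb(2,1) bb(5)[symmetric]] using dneg[OF d] .
    ultimately show False unfolding posHalf_def by auto
  qed
  have K_I: "\<forall>p\<in>profiles C lam. \<forall>q\<in>profiles C lam.
            equivXY C lam X Y p q \<longrightarrow> pinner C lam p ?v > 0 \<longrightarrow> pinner C lam q ?v > 0"
    if c: "\<forall>b\<in>?B. ?v b = c * ?r b" for c
  proof (intro ballI impI)
    fix p q assume e: "equivXY C lam X Y p q" and pos: "pinner C lam p ?v > 0"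
    have "pinner C lam p ?v - pinner C lam q ?v = (\<Sum>b\<in>?B. (p b - q b) * ?v b)"
      unfolding pinner_def by (simp add: sum_subtractf[symmetric] left_diff_distrib)
    also have "\<dots> = (\<Sum>b\<in>?B. c * ((p b - q b) * ?a1 b) - c * ((p b - q b) * ?a2 b))"
      by (rule sum.cong) (auto simp: c rvec_def algebra_simps)
    also have "\<dots> = c * pinner C lam (\<lambda>b. p b - q b) ?a1 - c * pinner C lam (\<lambda>b. p b - q b) ?a2"
      unfolding pinner_def by (simp add: sum_subtractf sum_distrib_left)
    also have "\<dots> = 0" using e unfolding equivXY_def by simp
    finally show "pinner C lam q ?v > 0" using pos by simp
  qed
  have K_II: "\<forall>T\<in>SO_P C lam. T ?r = ?r \<longrightarrow> T ` posHalf C lam ?v \<subseteq> posHalf C lam ?v"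
    if c: "\<forall>b\<in>?B. ?v b = c * ?r b" for c
  proof (intro ballI impI subsetI)
    fix T x assume T: "T \<in> SO_P C lam" and Tr: "T ?r = ?r" and x: "x \<in> T ` posHalf C lam ?v"
    then obtain u where u: "u \<in> profiles C lam" "pinner C lam u ?v > 0" and xu: "x = T u"
      unfolding posHalf_def by auto
    have lv: "pinner C lam f ?v = c * pinner C lam f ?r" for f
      unfolding pinner_def sum_distrib_left by (rule sum.cong) (auto simp: c)
    have Tu: "T u \<in> profiles C lam" using T u(1) unfolding SO_P_def plinear_def by blast
    have "pinner C lam (T u) ?v = c * pinner C lam (T u) (T ?r)" using lv Tr by simp
    also have "\<dots> = pinner C lam u ?v" using so_inner[OF T u(1) rprof] lv by simp
    finally show "x \<in> posHalf C lam ?v" using xu Tu u(2) unfolding posHalf_def by simp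
  qed
  show ?thesis
  proof
    assume I: "\<forall>p\<in>profiles C lam. \<forall>q\<in>profiles C lam.
            equivXY C lam X Y p q \<longrightarrow> pinner C lam p ?v > 0 \<longrightarrow> pinner C lam q ?v > 0"
    then obtain c where "\<forall>b\<in>?B. ?v b = c * ?r b" using I_K K by blast
    then show "\<forall>T\<in>SO_P C lam. T ?r = ?r \<longrightarrow> T ` posHalf C lam ?v \<subseteq> posHalf C lam ?v" by (rule K_II)
  next
    assume II: "\<forall>T\<in>SO_P C lam. T ?r = ?r \<longrightarrow> T ` posHalf C lam ?v \<subseteq> posHalf C lam ?v"
    then obtain c where "\<forall>b\<in>?B. ?v b = c * ?r b" using II_K K by blast
    then show "\<forall>p\<in>profiles C lam. \<forall>q\<in>profiles C lam.
            equivXY C lam X Y p q \<longrightarrow> pinner C lam p ?v > 0 \<longrightarrow> pinner C lam q ?v > 0" by (rule K_I)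
  qed
qed

end
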